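(* Let $k>1$ be an integer, $p=\frac{2k+1}{2k+3}$ and $t=\frac{k+1}{k+2}$. Then bold play is optimal, i.e. $\pi(p,t)=p$.
   Context: Let $\beta_1,\beta_2,\ldots$ be independent Bernoulli random variables with success probability $p$. A stake sequence is a sequence $\gamma=(c_1,c_2,\ldots)$ of non-negative reals with $c_1\ge c_2\ge\cdots$ and $\sum_i c_i=1$; write $S_\gamma=\sum_i c_i\beta_i$. For $0\le p\le t\le 1$ define $\pi(p,t)=\sup\{\mathbf P(S_\gamma\ge t)\mid \gamma \text{ a stake sequence}\}$. Bold play for threshold $t$ is the stake sequence with $c_i=\frac1m$ for $i\le m$ and $c_i=0$ for $i>m$, where $m=\lfloor 1/t\rfloor$; it is optimal if it attains $\pi(p,t)$. For $t>\frac12$ bold play is $c_1=1$, with success probability $p$. *)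

theory Defs
  imports "HOL-Probability.Probability"
begin

text \<open>The i.i.d. Bernoulli(p) sequence beta_0, beta_1, ... as the coordinates of the
  infinite product of Bernoulli distributions (indices shifted to start at 0).\<close>
definition bern_seq :: "real \<Rightarrow> (nat \<Rightarrow> bool) measure" where
  "bern_seq p = PiM UNIV (\<lambda>_. measure_pmf (bernoulli_pmf p))"

definition stake_seq :: "(nat \<Rightarrow> real) \<Rightarrow> bool" where
  "stake_seq c \<longleftrightarrow> (\<forall>i. 0 \<le> c i) \<and> (\<forall>i. c (Suc i) \<le> c i) \<and> c sums 1"

definition S_gamma :: "(nat \<Rightarrow> real) \<Rightarrow> (nat \<Rightarrow> bool) \<Rightarrow> real" where
  "S_gamma c \<omega> = (\<Sum>i. c i * (if \<omega> i then 1 else 0))"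

definition succ_prob :: "real \<Rightarrow> real \<Rightarrow> (nat \<Rightarrow> real) \<Rightarrow> real" where
  "succ_prob p t c = measure (bern_seq p) {\<omega> \<in> space (bern_seq p). S_gamma c \<omega> \<ge> t}"

definition pi_opt :: "real \<Rightarrow> real \<Rightarrow> real" where
  "pi_opt p t = (SUP c \<in> {c. stake_seq c}. succ_prob p t c)"

end

theory Submission
  imports Defs
begin

lemma shift_inj_aux:
  fixes M :: nat
  assumes "a' \<le> a" "a < M" "(a + d) mod M = (a' + d) mod M"
  shows "a = a'"
proof -
  have "M dvd (a + d) - (a' + d)" using assms(1,3) mod_eq_dvd_iff_nat[of "a'+d" "a+d" M] by simp
  hence "M dvd a - a'" by simp
  moreover have "a - a' < M" using assms by simp
  ultimately have "a - a' = 0" using dvd_imp_le by (metis gr0I leD)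
  thus ?thesis using assms(1) by simp
qed
lemma shift_inj:
  fixes M :: nat
  assumes "a < M" "a' < M" "(a + d) mod M = (a' + d) mod M"
  shows "a = a'"
  using shift_inj_aux assms by (metis nat_le_linear)
lemma shift_inj2:
  fixes M :: nat
  assumes "d < M" "d' < M" "(a + d) mod M = (a + d') mod M"
  shows "d = d'"
  using shift_inj[of d M d' a] assms by (simp add: add.commute)
lemma shift_sum:
  fixes x :: "nat \<Rightarrow> real" and M :: nat
  shows "(\<Sum>a<M. x ((a + d) mod M)) = (\<Sum>a<M. x a)"
proof (cases "M = 0")
  case True then show ?thesis by simp
next
  case False
  have inj: "inj_on (\<lambda>a. (a + d) mod M) {..<M}"
    by (intro inj_onI) (auto intro: shift_inj)
  have sub: "(\<lambda>a. (a + d) mod M) ` {..<M} \<subseteq> {..<M}" using False by auto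
  have "(\<lambda>a. (a + d) mod M) ` {..<M} = {..<M}"
    using endo_inj_surj[OF _ sub inj] by simp
  hence bij: "bij_betw (\<lambda>a. (a + d) mod M) {..<M} {..<M}" using inj by (simp add: bij_betw_def)
  show ?thesis using sum.reindex_bij_betw[OF bij, of x] by simp
qed

lemma class_two:
  fixes x :: "nat \<Rightarrow> real" and k d :: nat
  assumes le: "\<forall>a<2*k+3. x a \<le> 1/(real k + 2)"
    and sum1: "(\<Sum>a<2*k+3. x a) = 1"
    and nodup: "\<forall>a<2*k+3. \<forall>b<2*k+3. a \<noteq> b \<longrightarrow> x a = 1/(real k + 2) \<longrightarrow> x b = 1/(real k + 2) \<longrightarrow> False"
    and d: "0 < d" "d < 2*k+3"
  shows "2 \<le> card {a\<in>{..<2*k+3}. 1/(real k + 2) < x a + x ((a+d) mod (2*k+3))}"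
proof (rule ccontr)
  define M where "M = 2*k+3"
  define s where "s = 1/(real k + 2)"
  define g where "g a = x a + x ((a+d) mod M)" for a
  define K where "K = {a\<in>{..<M}. s < g a}"
  assume "\<not> 2 \<le> card {a\<in>{..<2*k+3}. 1/(real k + 2) < x a + x ((a+d) mod (2*k+3))}"
  hence cK: "card K \<le> Suc 0" unfolding K_def g_def M_def s_def by simp
  have finK: "finite K" unfolding K_def by simp
  have Ms: "real M * s = 2 - s" unfolding M_def s_def by (simp add: field_simps)
  have spos: "0 < s" unfolding s_def by simp
  have sumg: "(\<Sum>a<M. g a) = 2"
    unfolding g_def sum.distrib using shift_sum[of x d M] sum1 unfolding M_def by simp
  have gle: "g a \<le> 2 * s" if "a < M" for a
    using le that unfolding g_def s_def M_def by (smt (verit) mod_less_divisor zero_less_iff_neq_zero add_gr_0 zero_less_numeral)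
  show False
  proof (cases "K = {}")
    case True
    have "(\<Sum>a<M. g a) \<le> (\<Sum>a<M. s)"
    proof (intro sum_mono)
      fix a assume "a \<in> {..<M}"
      hence "a \<notin> K" using True by simp
      thus "g a \<le> s" using \<open>a \<in> {..<M}\<close> unfolding K_def by auto
    qed
    then show False using sumg Ms spos by simp
  next
    case False
    then obtain a0 where a0: "a0 \<in> K" by auto
    with cK finK have Ka0: "K = {a0}" using card_le_Suc0_iff_eq by blast
    have a0M: "a0 < M" using a0 unfolding K_def by simp
    have "(\<Sum>a<M. g a) = g a0 + (\<Sum>a\<in>{..<M}-{a0}. g a)"
      using a0M by (simp add: sum.remove)
    also have "(\<Sum>a\<in>{..<M}-{a0}. g a) \<le> (\<Sum>a\<in>{..<M}-{a0}. s)"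
    proof (intro sum_mono)
      fix a assume a: "a \<in> {..<M}-{a0}"
      hence "a \<notin> K" using Ka0 by simp
      thus "g a \<le> s" using a unfolding K_def by auto
    qed
    also have "(\<Sum>a\<in>{..<M}-{a0}. s) = (real M - 1) * s"
      using a0M by (simp add: card_Diff_singleton)
    finally have "2 \<le> g a0 + (real M - 1) * s" using sumg by simp
    hence "2 * s \<le> g a0" using Ms by (simp add: algebra_simps)
    hence eq: "x a0 = s" "x ((a0+d) mod M) = s"
      using le a0M unfolding g_def s_def M_def
      by (smt (verit) mod_less_divisor zero_less_iff_neq_zero add_gr_0 zero_less_numeral)+
    have ne: "(a0+d) mod M \<noteq> a0"
    proof
      assume "(a0+d) mod M = a0"
      hence "(a0+d) mod M = (a0+0) mod M" using a0M by simp
      hence "d = 0" using shift_inj2[of d M 0 a0] d a0M unfolding M_def by simp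
      thus False using d by simp
    qed
    have "(a0+d) mod M < M" unfolding M_def by simp
    then show False using nodup eq ne a0M unfolding M_def s_def by metis
  qed
qed


lemma heavy_caseA:
  fixes x :: "nat \<Rightarrow> real" and k u :: nat and s :: real
  assumes nonneg: "\<forall>a<2*k+3. 0 \<le> x a" and u: "u < 2*k+3" "s < x u"
  shows "4*k+4 \<le> card {(a,b)\<in>{..<2*k+3}\<times>{..<2*k+3}. a \<noteq> b \<and> s < x a + x b}"
proof -
  define M where "M = 2*k+3"
  define H where "H = {(a,b)\<in>{..<M}\<times>{..<M}. a \<noteq> b \<and> s < x a + x b}"
  define A1 where "A1 = (\<lambda>b. (u,b)) ` ({..<M} - {u})"
  define A2 where "A2 = (\<lambda>b. (b,u)) ` ({..<M} - {u})"
  have c1: "card A1 = 2*k+2" unfolding A1_def using u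
    by (subst card_image) (auto simp: inj_on_def card_Diff_singleton M_def)
  have c2: "card A2 = 2*k+2" unfolding A2_def using u
    by (subst card_image) (auto simp: inj_on_def card_Diff_singleton M_def)
  have disj: "A1 \<inter> A2 = {}" unfolding A1_def A2_def by auto
  have sub: "A1 \<union> A2 \<subseteq> H" unfolding A1_def A2_def H_def using u nonneg unfolding M_def
    by (auto intro: add_pos_nonneg add_nonneg_pos less_le_trans[of s "x u"] simp: add_increasing add_increasing2)
  have finH: "finite H" unfolding H_def by (rule finite_subset[of _ "{..<M}\<times>{..<M}"]) auto
  have "card (A1 \<union> A2) = 4*k+4"
    using c1 c2 disj by (subst card_Un_disjoint) (auto simp: A1_def A2_def)
  with card_mono[OF finH sub] show ?thesis unfolding H_def M_def by simp
qed


lemma heavy_caseC: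
  fixes x :: "nat \<Rightarrow> real" and k :: nat
  assumes le: "\<forall>a<2*k+3. x a \<le> 1/(real k + 2)"
    and sum1: "(\<Sum>a<2*k+3. x a) = 1"
    and nodup: "\<forall>a<2*k+3. \<forall>b<2*k+3. a \<noteq> b \<longrightarrow> x a = 1/(real k + 2) \<longrightarrow> x b = 1/(real k + 2) \<longrightarrow> False"
  shows "4*k+4 \<le> card {(a,b)\<in>{..<2*k+3}\<times>{..<2*k+3}. a \<noteq> b \<and> 1/(real k + 2) < x a + x b}"
proof -
  define M where "M = 2*k+3"
  define s where "s = 1/(real k + 2)"
  define H where "H = {(a,b)\<in>{..<M}\<times>{..<M}. a \<noteq> b \<and> s < x a + x b}"
  define K where "K d = {a\<in>{..<M}. s < x a + x ((a+d) mod M)}" for d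
  define D where "D = Sigma {0<..<M} K"
  define \<phi> where "\<phi> = (\<lambda>(d,a). (a, (a+d) mod M))"
  have cK: "2 \<le> card (K d)" if "d \<in> {0<..<M}" for d
    using class_two[OF le sum1 nodup, of d] that unfolding K_def M_def s_def by simp
  have finD: "finite D" unfolding D_def K_def by auto
  have "card D = (\<Sum>d\<in>{0<..<M}. card (K d))"
    unfolding D_def by (rule card_SigmaI) (auto simp: K_def)
  also have "\<dots> \<ge> (\<Sum>d\<in>{0<..<M}. 2)" by (intro sum_mono cK)
  finally have cD: "card D \<ge> 4*k+4" unfolding M_def by simp
  have inj: "inj_on \<phi> D"
  proof (rule inj_onI)
    fix p1 p2 assume p1: "p1 \<in> D" and p2: "p2 \<in> D" and eq: "\<phi> p1 = \<phi> p2"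
    obtain d1 a1 where 1: "p1 = (d1,a1)" by force
    obtain d2 a2 where 2: "p2 = (d2,a2)" by force
    have "a1 = a2" "(a1 + d1) mod M = (a1 + d2) mod M" using eq unfolding 1 2 \<phi>_def by auto
    moreover have "d1 < M" "d2 < M" using p1 p2 unfolding 1 2 D_def by auto
    ultimately show "p1 = p2" unfolding 1 2 using shift_inj2 by blast
  qed
  have sub: "\<phi> ` D \<subseteq> H"
  proof
    fix y assume "y \<in> \<phi> ` D"
    then obtain d a where da: "(d,a) \<in> D" "y = (a, (a+d) mod M)" unfolding \<phi>_def by auto
    have d: "0 < d" "d < M" and a: "a < M" and h: "s < x a + x ((a+d) mod M)"
      using da unfolding D_def K_def by auto
    have ne: "(a+d) mod M \<noteq> a"
    proof
      assume "(a+d) mod M = a"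
      hence "(a+d) mod M = (a+0) mod M" using a by simp
      hence "d = 0" using shift_inj2[of d M 0 a] d a by simp
      thus False using d by simp
    qed
    show "y \<in> H" unfolding H_def da(2) using a h ne by (auto simp: M_def)
  qed
  have finH: "finite H" unfolding H_def by (rule finite_subset[of _ "{..<M}\<times>{..<M}"]) auto
  have "card D = card (\<phi> ` D)" using card_image[OF inj] by simp
  also have "\<dots> \<le> card H" by (rule card_mono[OF finH sub])
  finally show ?thesis using cD unfolding H_def M_def s_def by simp
qed


lemma heavy_caseB:
  fixes x :: "nat \<Rightarrow> real" and k u v :: nat
  assumes nonneg: "\<forall>a<2*k+3. 0 \<le> x a" and le: "\<forall>a<2*k+3. x a \<le> 1/(real k + 2)"
    and sum1: "(\<Sum>a<2*k+3. x a) = 1" and k2: "2 \<le> k"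
    and uv: "u < 2*k+3" "v < 2*k+3" "u \<noteq> v" "x u = 1/(real k + 2)" "x v = 1/(real k + 2)"
  shows "4*k+4 \<le> card {(a,b)\<in>{..<2*k+3}\<times>{..<2*k+3}. a \<noteq> b \<and> 1/(real k + 2) < x a + x b}"
proof -
  define M where "M = 2*k+3"
  define s where "s = 1/(real k + 2)"
  define H where "H = {(a,b)\<in>{..<M}\<times>{..<M}. a \<noteq> b \<and> s < x a + x b}"
  define T where "T = {w\<in>{..<M}. w \<noteq> u \<and> w \<noteq> v \<and> 0 < x w}"
  have spos: "0 < s" unfolding s_def by simp
  have ks: "(real k + 2) * s = 1" unfolding s_def by simp
  have finT: "finite T" unfolding T_def by simp
  have finH: "finite H" unfolding H_def by (rule finite_subset[of _ "{..<M}\<times>{..<M}"]) auto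
  have uvM: "u \<in> {..<M}" "v \<in> {..<M}" using uv unfolding M_def by auto
  have "(\<Sum>a<M. x a) = x u + (\<Sum>a\<in>{..<M}-{u}. x a)"
    using uvM by (simp add: sum.remove)
  also have "(\<Sum>a\<in>{..<M}-{u}. x a) = x v + (\<Sum>a\<in>{..<M}-{u}-{v}. x a)"
    using uvM uv(3) by (subst sum.remove[of _ v]) auto
  also have "(\<Sum>a\<in>{..<M}-{u}-{v}. x a) = (\<Sum>a\<in>T. x a)"
  proof (rule sum.mono_neutral_right)
    show "T \<subseteq> {..<M}-{u}-{v}" unfolding T_def by auto
    show "\<forall>i\<in>{..<M} - {u} - {v} - T. x i = 0"
      using nonneg unfolding T_def M_def by force
  qed auto
  finally have sT: "(\<Sum>a\<in>T. x a) = real k * s"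
    using sum1 uv(4,5) ks unfolding M_def s_def by (simp add: field_simps)
  have "(\<Sum>a\<in>T. x a) \<le> (\<Sum>a\<in>T. s)"
    using le unfolding T_def M_def s_def by (intro sum_mono) auto
  hence "real k * s \<le> real (card T) * s" using sT by simp
  hence cT: "k \<le> card T" using spos by simp
  define B1 where "B1 = {u,v} \<times> T"
  define B2 where "B2 = T \<times> {u,v}"
  define P where "P = {(u,v),(v,u)}"
  have cB1: "card B1 = 2 * card T" unfolding B1_def using uv(3) by (simp add: card_cartesian_product)
  have cB2: "card B2 = 2 * card T" unfolding B2_def using uv(3) by (simp add: card_cartesian_product)
  have cP: "card P = 2" unfolding P_def using uv(3) by auto
  have d12: "B1 \<inter> B2 = {}" unfolding B1_def B2_def T_def by auto
  have d3: "(B1 \<union> B2) \<inter> P = {}" unfolding B1_def B2_def T_def P_def by auto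
  have cU: "card (B1 \<union> B2 \<union> P) = 4 * card T + 2"
  proof -
    have f: "finite B1" "finite B2" "finite P" using finT unfolding B1_def B2_def P_def by auto
    have "card (B1 \<union> B2) = card B1 + card B2" using f d12 by (rule_tac card_Un_disjoint) auto
    moreover have "card (B1 \<union> B2 \<union> P) = card (B1 \<union> B2) + card P"
      using f d3 by (rule_tac card_Un_disjoint) auto
    ultimately show ?thesis using cB1 cB2 cP by simp
  qed
  have hu: "s < x u + x w" "s < x w + x u" "s < x v + x w" "s < x w + x v" if "w \<in> T" for w
    using that uv(4,5) unfolding T_def s_def by auto
  have subU: "B1 \<union> B2 \<union> P \<subseteq> H"
    using hu uvM uv(3,4,5) spos unfolding B1_def B2_def P_def H_def s_def
    by (auto simp: T_def)
  show ?thesis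
  proof (cases "k + 1 \<le> card T")
    case True
    have "card (B1 \<union> B2 \<union> P) \<le> card H" by (rule card_mono[OF finH subU])
    then show ?thesis using True cU unfolding H_def M_def s_def by simp
  next
    case False
    hence cTk: "card T = k" using cT by simp
    have "(\<Sum>a\<in>T. s - x a) = 0" using sT cTk by (simp add: sum_subtractf)
    moreover have "\<forall>a\<in>T. 0 \<le> s - x a" using le unfolding T_def M_def s_def by auto
    ultimately have "\<forall>a\<in>T. s - x a = 0" using sum_nonneg_eq_0_iff[OF finT, of "\<lambda>a. s - x a"] by simp
    hence allT: "\<forall>a\<in>T. x a = s" by simp
    have "T \<noteq> {}" using cTk k2 by auto
    then obtain w1 where w1: "w1 \<in> T" by blast
    have "card (T - {w1}) \<ge> 1" using cTk k2 w1 finT by (simp add: card_Diff_singleton)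
    hence "T - {w1} \<noteq> {}" by (metis card.empty not_one_le_zero)
    then obtain w2 where w2: "w2 \<in> T - {w1}" by blast
    define P2 where "P2 = {(w1,w2),(w2,w1)}"
    have cP2: "card P2 = 2" unfolding P2_def using w2 by auto
    have wfacts: "w1 \<noteq> u" "w1 \<noteq> v" "w2 \<noteq> u" "w2 \<noteq> v" "w1 < M" "w2 < M" "w1 \<noteq> w2"
      using w1 w2 unfolding T_def by auto
    have d4: "(B1 \<union> B2 \<union> P) \<inter> P2 = {}"
      using wfacts unfolding B1_def B2_def P_def P2_def by auto
    have "x w1 = s" "x w2 = s" using allT w1 w2 by auto
    hence "s < x w1 + x w2" "s < x w2 + x w1" using spos by auto
    hence sub2: "P2 \<subseteq> H" using wfacts unfolding P2_def H_def by auto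
    have "card (B1 \<union> B2 \<union> P \<union> P2) = 4 * k + 4"
    proof -
      have "card (B1 \<union> B2 \<union> P \<union> P2) = card (B1 \<union> B2 \<union> P) + card P2"
        using d4 finT by (rule_tac card_Un_disjoint) (auto simp: B1_def B2_def P_def P2_def)
      thus ?thesis using cU cP2 cTk by simp
    qed
    moreover have "card (B1 \<union> B2 \<union> P \<union> P2) \<le> card H"
      using subU sub2 by (intro card_mono[OF finH]) auto
    ultimately show ?thesis unfolding H_def M_def s_def by simp
  qed
qed



lemma distr_PiM_map_pmf:
  fixes U :: "'a pmf" and f :: "'a \<Rightarrow> 'b"
  shows "distr (PiM (UNIV::nat set) (\<lambda>_. measure_pmf U)) (PiM UNIV (\<lambda>_. measure_pmf (map_pmf f U)))
           (\<lambda>x i. f (x i)) = PiM UNIV (\<lambda>_. measure_pmf (map_pmf f U))"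
    (is "distr ?C ?B ?g = ?B")
proof (rule measure_eqI_PiM_infinite[symmetric, OF refl])
  interpret B: prob_space ?B
    by (intro prob_space_PiM) (simp add: measure_pmf.prob_space_axioms)
  interpret C: prob_space ?C
    by (intro prob_space_PiM) (simp add: measure_pmf.prob_space_axioms)
  show "finite_measure ?B" by unfold_locales
  have gm: "?g \<in> measurable ?C ?B"
  proof (rule measurable_PiM_single')
    fix i :: nat
    show "(\<lambda>x. f (x i)) \<in> measurable ?C (measure_pmf (map_pmf f U))"
    proof -
      have h1: "(\<lambda>x. x i) \<in> measurable ?C (measure_pmf U)" by (rule measurable_component_singleton) simp
      have h2: "f \<in> measurable (measure_pmf U) (measure_pmf (map_pmf f U))" by simp
      show ?thesis using measurable_compose[OF h1 h2] .
    qed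
  qed (simp add: space_PiM)
  show "sets (distr ?C ?B ?g) = sets ?B" by simp
  fix J :: "nat set" and A assume J: "finite J" "J \<subseteq> UNIV" and A: "\<And>i. i \<in> J \<Longrightarrow> A i \<in> sets (measure_pmf (map_pmf f U))"
  have "?B (prod_emb UNIV (\<lambda>_. measure_pmf (map_pmf f U)) J (Pi\<^sub>E J A)) = (\<Prod>j\<in>J. emeasure (map_pmf f U) (A j))"
    using J A by (intro emeasure_PiM_emb) (auto simp: measure_pmf.prob_space_axioms)
  also have "\<dots> = (\<Prod>j\<in>J. emeasure U (f -` A j))" by simp
  also have "\<dots> = ?C (prod_emb UNIV (\<lambda>_. measure_pmf U) J (Pi\<^sub>E J (\<lambda>j. f -` A j)))"
    using J by (intro emeasure_PiM_emb[symmetric]) (auto simp: measure_pmf.prob_space_axioms)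
  also have "prod_emb UNIV (\<lambda>_. measure_pmf U) J (Pi\<^sub>E J (\<lambda>j. f -` A j)) = ?g -` prod_emb UNIV (\<lambda>_. measure_pmf (map_pmf f U)) J (Pi\<^sub>E J A) \<inter> space ?C"
    by (auto simp: prod_emb_def space_PiM PiE_iff)
  also have "?C \<dots> = distr ?C ?B ?g (prod_emb UNIV (\<lambda>_. measure_pmf (map_pmf f U)) J (Pi\<^sub>E J A))"
    using J A by (intro emeasure_distr[symmetric] gm sets_PiM_I) auto
  finally show "?B (prod_emb UNIV (\<lambda>_. measure_pmf (map_pmf f U)) J (Pi\<^sub>E J A)) = distr ?C ?B ?g (prod_emb UNIV (\<lambda>_. measure_pmf (map_pmf f U)) J (Pi\<^sub>E J A))" .
qed



lemma map_pmf_pair_bern: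
  fixes M a b :: nat
  assumes "a < M" "b < M" "a \<noteq> b"
  shows "map_pmf (\<lambda>col. col mod M \<noteq> a \<and> col mod M \<noteq> b) (pmf_of_set {..<M})
         = bernoulli_pmf ((real M - 2) / real M)"
proof (rule pmf_eqI)
  have M2: "2 \<le> M" using assms by linarith
  have ne: "{..<M} \<noteq> {}" using assms by auto
  fix z :: bool
  have e1: "{..<M} \<inter> (\<lambda>col. col mod M \<noteq> a \<and> col mod M \<noteq> b) -` {True} = {..<M} - {a,b}"
  proof (rule set_eqI)
    fix col show "col \<in> {..<M} \<inter> (\<lambda>col. col mod M \<noteq> a \<and> col mod M \<noteq> b) -` {True} \<longleftrightarrow> col \<in> {..<M} - {a,b}"
      by (cases "col < M") simp_all
  qed
  have e2: "{..<M} \<inter> (\<lambda>col. col mod M \<noteq> a \<and> col mod M \<noteq> b) -` {False} = {a,b}"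
  proof (rule set_eqI)
    fix col show "col \<in> {..<M} \<inter> (\<lambda>col. col mod M \<noteq> a \<and> col mod M \<noteq> b) -` {False} \<longleftrightarrow> col \<in> {a,b}"
      using assms by (cases "col < M") auto
  qed
  have c1: "card ({..<M} - {a,b}) = M - 2" using assms by (subst card_Diff_subset) auto
  have c2: "card {a,b} = 2" using assms by auto
  have p01: "0 \<le> (real M - 2) / real M" "(real M - 2) / real M \<le> 1" using M2 by auto
  show "pmf (map_pmf (\<lambda>col. col mod M \<noteq> a \<and> col mod M \<noteq> b) (pmf_of_set {..<M})) z
        = pmf (bernoulli_pmf ((real M - 2) / real M)) z"
  proof (cases z)
    case True
    then show ?thesis using ne p01 M2 by (simp add: pmf_map measure_pmf_of_set e1 c1 of_nat_diff)
  next
    case False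
    then show ?thesis using ne p01 M2 assms by (simp add: pmf_map measure_pmf_of_set e2 c2 field_simps)
  qed
qed



definition Xc :: "(nat \<Rightarrow> real) \<Rightarrow> nat \<Rightarrow> (nat \<Rightarrow> nat) \<Rightarrow> nat \<Rightarrow> real" where
  "Xc c M ch a = (\<Sum>i. c i * (if ch i mod M = a then 1 else 0))"

lemma summ_ind:
  fixes c :: "nat \<Rightarrow> real"
  assumes "\<forall>i. 0 \<le> c i" "summable c"
  shows "summable (\<lambda>i. c i * (if P i then 1 else 0))"
  by (rule summable_comparison_test'[where g=c and N=0]) (use assms in auto)

lemma S_pair:
  fixes c :: "nat \<Rightarrow> real"
  assumes nn: "\<forall>i. 0 \<le> c i" and s1: "c sums 1" and ab: "a \<noteq> b"
  shows "S_gamma c (\<lambda>i. ch i mod M \<noteq> a \<and> ch i mod M \<noteq> b) = 1 - Xc c M ch a - Xc c M ch b"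
proof -
  have sc: "summable c" using s1 by (rule sums_summable)
  let ?r = "\<lambda>i. c i * (if ch i mod M \<noteq> a \<and> ch i mod M \<noteq> b then 1 else 0)"
  let ?ea = "\<lambda>i. c i * (if ch i mod M = a then 1 else 0)"
  let ?eb = "\<lambda>i. c i * (if ch i mod M = b then 1 else 0)"
  have s_r: "summable ?r" by (rule summ_ind[OF nn sc])
  have s_a: "summable ?ea" by (rule summ_ind[OF nn sc])
  have s_b: "summable ?eb" by (rule summ_ind[OF nn sc])
  have eq: "c = (\<lambda>i. ?r i + ?ea i + ?eb i)" using ab by (auto simp: fun_eq_iff)
  have "1 = suminf c" using s1 by (simp add: sums_iff)
  also have "\<dots> = suminf ?r + suminf ?ea + suminf ?eb"
    by (subst eq) (simp add: suminf_add[symmetric] s_r s_a s_b summable_add)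
  finally show ?thesis unfolding S_gamma_def Xc_def by simp
qed

lemma X_sum:
  fixes c :: "nat \<Rightarrow> real"
  assumes nn: "\<forall>i. 0 \<le> c i" and s1: "c sums 1" and M: "0 < M"
  shows "(\<Sum>a<M. Xc c M ch a) = 1"
proof -
  have sc: "summable c" using s1 by (rule sums_summable)
  have "(\<Sum>a<M. Xc c M ch a) = (\<Sum>i. \<Sum>a<M. c i * (if ch i mod M = a then 1 else 0))"
    unfolding Xc_def by (rule suminf_sum[symmetric]) (rule summ_ind[OF nn sc])
  also have "(\<lambda>i. \<Sum>a<M. c i * (if ch i mod M = a then 1 else 0)) = c"
  proof
    fix i
    have "(\<Sum>a<M. c i * (if ch i mod M = a then 1 else 0)) = (\<Sum>a<M. (if ch i mod M = a then c i else 0))"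
      by (intro sum.cong) auto
    also have "\<dots> = c i" using M by (simp add: sum.delta')
    finally show "(\<Sum>a<M. c i * (if ch i mod M = a then 1 else 0)) = c i" .
  qed
  also have "suminf c = 1" using s1 by (simp add: sums_iff)
  finally show ?thesis .
qed

lemma X_nonneg:
  fixes c :: "nat \<Rightarrow> real"
  assumes nn: "\<forall>i. 0 \<le> c i" and s1: "c sums 1"
  shows "0 \<le> Xc c M ch a"
  unfolding Xc_def using nn by (intro suminf_nonneg summ_ind[OF nn sums_summable[OF s1]]) auto


lemma heavy_count:
  fixes x :: "nat \<Rightarrow> real" and k :: nat
  assumes nonneg: "\<forall>a<2*k+3. 0 \<le> x a" and sum1: "(\<Sum>a<2*k+3. x a) = 1" and k2: "2 \<le> k"
  shows "4*k+4 \<le> card {(a,b)\<in>{..<2*k+3}\<times>{..<2*k+3}. a \<noteq> b \<and> 1/(real k + 2) < x a + x b}"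
proof (cases "\<exists>u<2*k+3. 1/(real k + 2) < x u")
  case True
  then obtain u where "u < 2*k+3" "1/(real k + 2) < x u" by blast
  then show ?thesis using heavy_caseA[OF nonneg] by blast
next
  case False
  hence le: "\<forall>a<2*k+3. x a \<le> 1/(real k + 2)" using not_less by blast
  show ?thesis
  proof (cases "\<exists>u<2*k+3. \<exists>v<2*k+3. u \<noteq> v \<and> x u = 1/(real k + 2) \<and> x v = 1/(real k + 2)")
    case True
    then obtain u v where "u<2*k+3" "v<2*k+3" "u \<noteq> v" "x u = 1/(real k + 2)" "x v = 1/(real k + 2)" by blast
    then show ?thesis using heavy_caseB[OF nonneg le sum1 k2] by blast
  next
    case False
    hence "\<forall>a<2*k+3. \<forall>b<2*k+3. a \<noteq> b \<longrightarrow> x a = 1/(real k + 2) \<longrightarrow> x b = 1/(real k + 2) \<longrightarrow> False"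
      by blast
    then show ?thesis using heavy_caseC[OF le sum1] by blast
  qed
qed

lemma fin_pairs[simp]: "finite {(a,b)\<in>{..<M::nat}\<times>{..<M}. P a b}"
  by (rule finite_subset[of _ "{..<M}\<times>{..<M}"]) auto

lemma fin_pairs'[simp]: "finite {(a,b). a < (M::nat) \<and> b < M \<and> P a b}"
  by (rule finite_subset[of _ "{..<M}\<times>{..<M}"]) auto

lemma card_off:
  "card {(a,b)\<in>{..<M}\<times>{..<M}. a \<noteq> b} = M * M - (M::nat)"
proof -
  define Of where "Of = {(a,b)\<in>{..<M}\<times>{..<M}. a \<noteq> b}"
  define Dg where "Dg = (\<lambda>a. (a,a)) ` {..<M}"
  have e: "{..<M}\<times>{..<M} = Of \<union> Dg" unfolding Of_def Dg_def by auto
  have cD: "card Dg = M" unfolding Dg_def by (subst card_image) (auto simp: inj_on_def)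
  have fOf: "finite Of" unfolding Of_def by simp
  have fD: "finite Dg" unfolding Dg_def by simp
  have dj: "Of \<inter> Dg = {}" unfolding Of_def Dg_def by auto
  have "card (Of \<union> Dg) = card Of + card Dg" by (rule card_Un_disjoint[OF fOf fD dj])
  moreover have "card ({..<M}\<times>{..<M}) = M * M" by (simp add: card_cartesian_product)
  ultimately have "M * M = card Of + M" using cD e by metis
  thus ?thesis unfolding Of_def by simp
qed

lemma light_count:
  fixes x :: "nat \<Rightarrow> real" and k :: nat
  assumes nonneg: "\<forall>a<2*k+3. 0 \<le> x a" and sum1: "(\<Sum>a<2*k+3. x a) = 1" and k2: "2 \<le> k"
  shows "card {(a,b)\<in>{..<2*k+3}\<times>{..<2*k+3}. a \<noteq> b \<and> x a + x b \<le> 1/(real k + 2)} + (4*k+4)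
         \<le> card {(a,b)\<in>{..<2*k+3}\<times>{..<2*k+3}. a \<noteq> b}"
proof -
  define M where "M = 2*k+3"
  define s where "s = 1/(real k + 2)"
  define L where "L = {(a,b)\<in>{..<M}\<times>{..<M}. a \<noteq> b \<and> x a + x b \<le> s}"
  define H where "H = {(a,b)\<in>{..<M}\<times>{..<M}. a \<noteq> b \<and> s < x a + x b}"
  have e: "{(a,b)\<in>{..<M}\<times>{..<M}. a \<noteq> b} = L \<union> H" unfolding L_def H_def by auto
  have fL: "finite L" unfolding L_def by simp
  have fH: "finite H" unfolding H_def by simp
  have dj: "L \<inter> H = {}" unfolding L_def H_def by auto
  have c: "card (L \<union> H) = card L + card H" by (rule card_Un_disjoint[OF fL fH dj])
  have h: "4*k+4 \<le> card H" using heavy_count[OF nonneg sum1 k2] unfolding H_def M_def s_def .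
  have "card L + (4*k+4) \<le> card {(a,b)\<in>{..<M}\<times>{..<M}. a \<noteq> b}" unfolding e c using h by simp
  thus ?thesis unfolding L_def M_def s_def .
qed


lemma S_gamma_meas[measurable]: "S_gamma c \<in> borel_measurable (bern_seq p)"
  unfolding S_gamma_def bern_seq_def
  by (rule borel_measurable_suminf) measurable

lemma Xc_meas[measurable]: "(\<lambda>ch. Xc c M ch a) \<in> borel_measurable (PiM UNIV (\<lambda>_::nat. measure_pmf (U :: nat pmf)))"
  unfolding Xc_def
  by (rule borel_measurable_suminf) measurable

lemma map_meas:
  fixes U :: "'a pmf" and f :: "'a \<Rightarrow> 'b"
  shows "(\<lambda>x i. f (x i)) \<in> measurable (PiM (UNIV::nat set) (\<lambda>_. measure_pmf U)) (PiM UNIV (\<lambda>_. measure_pmf (map_pmf f U)))"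
proof (rule measurable_PiM_single')
  fix i :: nat
  have h1: "(\<lambda>x. x i) \<in> measurable (PiM (UNIV::nat set) (\<lambda>_. measure_pmf U)) (measure_pmf U)"
    by (rule measurable_component_singleton) simp
  have h2: "f \<in> measurable (measure_pmf U) (measure_pmf (map_pmf f U))" by simp
  show "(\<lambda>x. f (x i)) \<in> measurable (PiM (UNIV::nat set) (\<lambda>_. measure_pmf U)) (measure_pmf (map_pmf f U))"
    using measurable_compose[OF h1 h2] .
qed (simp add: space_PiM)

lemma succ_bound:
  fixes k :: nat and c :: "nat \<Rightarrow> real"
  assumes k2: "2 \<le> k" and nn: "\<forall>i. 0 \<le> c i" and s1: "c sums 1"
  shows "succ_prob ((2 * real k + 1) / (2 * real k + 3)) ((real k + 1) / (real k + 2)) c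
         \<le> (2 * real k + 1) / (2 * real k + 3)"
proof -
  define M where "M = 2*k+3"
  define p where "p = (2 * real k + 1) / (2 * real k + 3)"
  define t where "t = (real k + 1) / (real k + 2)"
  define s where "s = 1 / (real k + 2)"
  define U where "U = pmf_of_set {..<M}"
  define C where "C = PiM (UNIV::nat set) (\<lambda>_. measure_pmf U)"
  define Off where "Off = {(a,b)\<in>{..<M}\<times>{..<M}. a \<noteq> b}"
  define A where "A a b = {ch \<in> space C. Xc c M ch a + Xc c M ch b \<le> s}" for a b
  define sp where "sp = succ_prob p t c"
  interpret C: prob_space C unfolding C_def
    by (intro prob_space_PiM) (simp add: measure_pmf.prob_space_axioms)
  have ts: "1 - t = s" unfolding t_def s_def by (simp add: field_simps)
  have pM: "p = (real M - 2) / real M" unfolding p_def M_def by (simp add: field_simps)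
  have Asets: "A a b \<in> sets C" for a b unfolding A_def C_def by measurable
  have step1: "sp = measure C (A a b)" if ab: "(a,b) \<in> Off" for a b
  proof -
    define f where "f col = (col mod M \<noteq> a \<and> col mod M \<noteq> b)" for col
    have ab': "a < M" "b < M" "a \<noteq> b" using ab unfolding Off_def by auto
    have mp: "map_pmf f U = bernoulli_pmf p"
      unfolding f_def U_def pM by (rule map_pmf_pair_bern[OF ab'])
    define B where "B = PiM (UNIV::nat set) (\<lambda>_. measure_pmf (map_pmf f U))"
    have Bb: "bern_seq p = B" unfolding B_def bern_seq_def mp ..
    have dB: "distr C B (\<lambda>x i. f (x i)) = B" unfolding C_def B_def by (rule distr_PiM_map_pmf)
    have gm: "(\<lambda>x i. f (x i)) \<in> measurable C B"
      unfolding C_def B_def by (rule map_meas)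
    define E where "E = {\<omega> \<in> space (bern_seq p). t \<le> S_gamma c \<omega>}"
    have Es: "E \<in> sets B" unfolding E_def Bb[symmetric] by measurable
    have "sp = measure B E" unfolding sp_def succ_prob_def E_def Bb ..
    also have "\<dots> = measure (distr C B (\<lambda>x i. f (x i))) E" using dB by simp
    also have "\<dots> = measure C ((\<lambda>x i. f (x i)) -` E \<inter> space C)"
      by (rule measure_distr[OF gm Es])
    also have "(\<lambda>x i. f (x i)) -` E \<inter> space C = A a b"
    proof -
      have "S_gamma c (\<lambda>i. f (ch i)) = 1 - Xc c M ch a - Xc c M ch b" for ch
        unfolding f_def by (rule S_pair[OF nn s1 ab'(3)])
      thus ?thesis unfolding E_def A_def using ts
        by (auto simp: Bb B_def C_def space_PiM)
    qed
    finally show ?thesis .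
  qed
  have sumeq: "(\<Sum>q\<in>Off. measure C (A (fst q) (snd q))) = real (card Off) * sp"
  proof -
    have "(\<Sum>q\<in>Off. measure C (A (fst q) (snd q))) = (\<Sum>q\<in>Off. sp)"
    proof (rule sum.cong[OF refl])
      fix q assume "q \<in> Off"
      then show "measure C (A (fst q) (snd q)) = sp" using step1[of "fst q" "snd q"] by simp
    qed
    thus ?thesis by simp
  qed
  have intg: "integrable C (indicator (A a b) :: _ \<Rightarrow> real)" for a b
    by (simp add: integrable_indicator_iff less_top[symmetric] Asets)
  have "(\<Sum>q\<in>Off. measure C (A (fst q) (snd q))) = integral\<^sup>L C (\<lambda>ch. \<Sum>q\<in>Off. indicator (A (fst q) (snd q)) ch)"
  proof -
    have "integral\<^sup>L C (\<lambda>ch. \<Sum>q\<in>Off. indicator (A (fst q) (snd q)) ch) = (\<Sum>q\<in>Off. integral\<^sup>L C (indicator (A (fst q) (snd q)) :: _ \<Rightarrow> real))"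
      using Bochner_Integration.integral_sum[where I=Off and M=C and f="\<lambda>q. indicator (A (fst q) (snd q)) :: _ \<Rightarrow> real"] intg by simp
    also have "\<dots> = (\<Sum>q\<in>Off. measure C (A (fst q) (snd q)))"
    proof (rule sum.cong[OF refl])
      fix q
      have "A (fst q) (snd q) \<inter> space C = A (fst q) (snd q)" unfolding A_def by auto
      then show "integral\<^sup>L C (indicator (A (fst q) (snd q)) :: _ \<Rightarrow> real) = measure C (A (fst q) (snd q))"
        by simp
    qed
    finally show ?thesis by simp
  qed
  also have "\<dots> \<le> integral\<^sup>L C (\<lambda>ch. real (card Off) - (4*k+4))"
  proof (rule integral_mono)
    show "integrable C (\<lambda>ch. \<Sum>q\<in>Off. indicator (A (fst q) (snd q)) ch :: real)"
      by (auto simp: intg)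
    show "integrable C (\<lambda>ch. real (card Off) - (4*k+4))" by simp
    fix ch assume ch: "ch \<in> space C"
    define x where "x a = Xc c M ch a" for a
    have xnn: "\<forall>a<2*k+3. 0 \<le> x a" unfolding x_def using X_nonneg[OF nn s1] by blast
    have xs: "(\<Sum>a<2*k+3. x a) = 1" unfolding x_def M_def using X_sum[OF nn s1] by simp
    have "(\<Sum>q\<in>Off. indicator (A (fst q) (snd q)) ch :: real) = (\<Sum>q\<in>Off. if x (fst q) + x (snd q) \<le> s then 1 else 0)"
      using ch by (intro sum.cong) (auto simp: A_def x_def indicator_def)
    also have "\<dots> = real (card {q\<in>Off. x (fst q) + x (snd q) \<le> s})"
      by (simp add: sum.inter_filter[symmetric] Off_def)
    also have "{q\<in>Off. x (fst q) + x (snd q) \<le> s} = {(a,b)\<in>{..<2*k+3}\<times>{..<2*k+3}. a \<noteq> b \<and> x a + x b \<le> 1/(real k + 2)}"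
      unfolding Off_def M_def s_def by auto
    finally have e1: "(\<Sum>q\<in>Off. indicator (A (fst q) (snd q)) ch :: real) = real (card {(a,b)\<in>{..<2*k+3}\<times>{..<2*k+3}. a \<noteq> b \<and> x a + x b \<le> 1/(real k + 2)})" .
    have "card {(a,b)\<in>{..<2*k+3}\<times>{..<2*k+3}. a \<noteq> b \<and> x a + x b \<le> 1/(real k + 2)} + (4*k+4) \<le> card Off"
      using light_count[OF xnn xs k2] unfolding Off_def M_def .
    then show "(\<Sum>q\<in>Off. indicator (A (fst q) (snd q)) ch :: real) \<le> real (card Off) - (4*k+4)"
      unfolding e1 by linarith
  qed
  also have "\<dots> = real (card Off) - (4*k+4)" by (simp add: C.prob_space)
  finally have "real (card Off) * sp \<le> real (card Off) - (4*k+4)" using sumeq by simp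
  moreover have "card Off = (2*k+3)*(2*k+3) - (2*k+3)" unfolding Off_def M_def by (rule card_off)
  ultimately have "real ((2*k+3)*(2*k+3) - (2*k+3)) * sp \<le> real ((2*k+3)*(2*k+3) - (2*k+3)) - (4*k+4)" by simp
  moreover have "real ((2*k+3)*(2*k+3) - (2*k+3)) = (2*real k+3)*(2*real k+2)"
    by (simp add: of_nat_diff algebra_simps)
  ultimately have "(2*real k+3)*(2*real k+2) * sp \<le> (2*real k+3)*(2*real k+2) - (4*k+4)" by simp
  moreover have "(2*real k+3)*(2*real k+2) - (4*k+4) = (2*real k+2)*(2*real k+1)"
    by (simp add: algebra_simps)
  ultimately have "(2*real k+2) * ((2*real k+3) * sp) \<le> (2*real k+2)*(2*real k+1)"
    by (simp add: algebra_simps)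
  hence "(2*real k+3) * sp \<le> 2*real k+1" by (simp add: mult_le_cancel_left_pos)
  hence "sp \<le> p" unfolding p_def by (simp add: pos_le_divide_eq mult.commute)
  thus ?thesis unfolding sp_def p_def t_def .
qed


lemma bold_succ:
  fixes p t :: real
  assumes p: "0 \<le> p" "p \<le> 1" and t: "0 < t" "t \<le> 1"
  shows "succ_prob p t (\<lambda>i. if i = 0 then 1 else 0) = p"
proof -
  define B where "B = bern_seq p"
  have PB: "prob_space B" unfolding B_def bern_seq_def
    by (intro prob_space_PiM) (simp add: measure_pmf.prob_space_axioms)
  have S0: "S_gamma (\<lambda>i. if i = 0 then 1 else 0) \<omega> = (if \<omega> 0 then 1 else 0)" for \<omega>
  proof -
    have "(\<lambda>i. (if i = 0 then 1 else 0) * (if \<omega> i then 1 else 0) :: real) = (\<lambda>i. if i = 0 then (if \<omega> 0 then 1 else 0) else 0)"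
      by auto
    moreover have "(\<lambda>i. if i = 0 then (if \<omega> 0 then 1 else 0) else 0 :: real) sums (if \<omega> 0 then 1 else 0)"
      using sums_single[of 0 "\<lambda>_. (if \<omega> 0 then 1 else 0 :: real)"] by simp
    ultimately show ?thesis unfolding S_gamma_def by (simp add: sums_iff)
  qed
  have set: "{\<omega> \<in> space B. t \<le> S_gamma (\<lambda>i. if i = 0 then 1 else 0) \<omega>} = (\<lambda>\<omega>. \<omega> 0) -` {True} \<inter> space B"
    using t by (auto simp: S0)
  have cm: "(\<lambda>\<omega>. \<omega> 0) \<in> measurable B (measure_pmf (bernoulli_pmf p))"
    unfolding B_def bern_seq_def by (rule measurable_component_singleton) simp
  have d: "distr B (measure_pmf (bernoulli_pmf p)) (\<lambda>\<omega>. \<omega> 0) = measure_pmf (bernoulli_pmf p)"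
    unfolding B_def bern_seq_def by (rule distr_PiM_component) (simp_all add: measure_pmf.prob_space_axioms)
  have "succ_prob p t (\<lambda>i. if i = 0 then 1 else 0) = measure B ((\<lambda>\<omega>. \<omega> 0) -` {True} \<inter> space B)"
    unfolding succ_prob_def B_def[symmetric] set ..
  also have "\<dots> = measure (distr B (measure_pmf (bernoulli_pmf p)) (\<lambda>\<omega>. \<omega> 0)) {True}"
    by (rule measure_distr[OF cm, symmetric]) simp
  also have "\<dots> = measure (measure_pmf (bernoulli_pmf p)) {True}" using d by simp
  also have "\<dots> = p" using p by (simp add: measure_pmf_single)
  finally show ?thesis .
qed

theorem proposition14:
  fixes k :: nat
  assumes "k > 1"
  shows "pi_opt ((2 * real k + 1) / (2 * real k + 3)) ((real k + 1) / (real k + 2))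
         = (2 * real k + 1) / (2 * real k + 3)"
proof -
  define p where "p = (2 * real k + 1) / (2 * real k + 3)"
  define t where "t = (real k + 1) / (real k + 2)"
  have k2: "2 \<le> k" using assms by simp
  define c0 where "c0 = (\<lambda>i::nat. if i = 0 then 1 else (0::real))"
  have st0: "stake_seq c0"
    unfolding stake_seq_def c0_def
    using sums_single[of 0 "\<lambda>_. 1::real"] by auto
  have p01: "0 \<le> p" "p \<le> 1" unfolding p_def by auto
  have t01: "0 < t" "t \<le> 1" unfolding t_def by auto
  have s0: "succ_prob p t c0 = p" unfolding c0_def by (rule bold_succ[OF p01 t01])
  have le: "succ_prob p t c \<le> p" if "c \<in> {c. stake_seq c}" for c
    using that succ_bound[OF k2, of c] unfolding stake_seq_def p_def t_def by auto
  have "pi_opt p t = Sup ((\<lambda>c. succ_prob p t c) ` {c. stake_seq c})" unfolding pi_opt_def ..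
  also have "\<dots> = p"
  proof (rule cSup_eq_maximum)
    show "p \<in> (\<lambda>c. succ_prob p t c) ` {c. stake_seq c}" using st0 s0 by force
    show "\<And>x. x \<in> (\<lambda>c. succ_prob p t c) ` {c. stake_seq c} \<Longrightarrow> x \<le> p" using le by blast
  qed
  finally show ?thesis unfolding p_def t_def .
qed

end
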